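(* Let $G=(V,E)$ be a finite undirected graph with $m=|E|\ge 1$ edges, and for each node $i\in V$ let $k_i$ denote its degree. Consider the random multigraph $G'$ produced by the configuration model from $G$ (see context). For nonnegative integers $a,b,c$ and positive integer $M$ define \[ A(a,b,M)=\sum_{t=1}^{\min\{a,b\}}(-1)^{t+1}\frac{\binom{a}{t}\binom{b}{t}\,t!}{\prod_{p=1}^{t}(2M+1-2p)}, \] \[ C(a,b,c,M)=\sum_{t=1}^{\min\{b,c-1\}}(-1)^{t+1}A(a,c-t,M-t)\,\frac{\binom{c}{t}\binom{b}{t}\,t!}{\prod_{p=1}^{t}(2M+1-2p)}, \] \[ T(a,b,c,M)=\sum_{t=1}^{\min\{a-1,b-1\}}(-1)^{t+1}C(a-t,b-t,c,M-t)\,\frac{\binom{a}{t}\binom{b}{t}\,t!}{\prod_{p=1}^{t}(2M+1-2p)}, \] with empty sums equal to $0$. Then for any three pairwise distinct nodes $i,j,r\in V$: (1) the probability that $i$ and $j$ are connected in $G'$ equals $A(k_i,k_j,m)$; (2) the probability that $i$ and $r$ are connected and $j$ and $r$ are connected in $G'$ equals $C(k_i,k_j,k_r,m)$; (3) the probability that $i$ and $r$ are connected, $j$ and $r$ are connected, and $i$ and $j$ are connected in $G'$ equals $T(k_i,k_j,k_r,m)$.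
   Context: Configuration model: given $G=(V,E)$ with $m$ edges and degrees $k_i$, each node $i$ is given $k_i$ "stubs" (half-edges), for a total of $2m$ stubs. A perfect matching of the $2m$ stubs is chosen uniformly at random among all $(2m)!/(2^m m!)=\prod_{p=1}^{m}(2m+1-2p)$ perfect matchings; each matched pair of stubs, one attached to node $u$ and one to node $v$, becomes an edge $\{u,v\}$ of the random multigraph $G'$ (multi-edges and self-loops allowed). Thus every node keeps its degree $k_i$. Two distinct nodes $u,v$ are said to be connected in $G'$ if at least one stub of $u$ is matched with at least one stub of $v$. *)

theory Defs
  imports Complex_Main "HOL-Library.Disjoint_Sets"
begin

definition simple_graph :: "'a set \<Rightarrow> 'a set set \<Rightarrow> bool" where
  "simple_graph V E \<longleftrightarrow> finite V \<and>
     (\<forall>e\<in>E. \<exists>u v. u \<noteq> v \<and> u \<in> V \<and> v \<in> V \<and> e = {u, v})"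

definition deg :: "'a set set \<Rightarrow> 'a \<Rightarrow> nat" where
  "deg E i = card {e\<in>E. i \<in> e}"

definition stubs :: "'a set \<Rightarrow> 'a set set \<Rightarrow> ('a \<times> nat) set" where
  "stubs V E = {(i, s). i \<in> V \<and> s < deg E i}"

definition perfect_matchings :: "'b set \<Rightarrow> 'b set set set" where
  "perfect_matchings S = {P. partition_on S P \<and> (\<forall>b\<in>P. card b = 2)}"

(* u and v are connected in the multigraph given by matching P:
   some stub of u is matched with some stub of v *)
definition cm_connected :: "('a \<times> nat) set set \<Rightarrow> 'a \<Rightarrow> 'a \<Rightarrow> bool" where
  "cm_connected P u v \<longleftrightarrow> (\<exists>b\<in>P. \<exists>s t. (u, s) \<in> b \<and> (v, t) \<in> b)"

definition cm_prob :: "'a set \<Rightarrow> 'a set set \<Rightarrow> (('a \<times> nat) set set \<Rightarrow> bool) \<Rightarrow> real" where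
  "cm_prob V E Q = real (card {P \<in> perfect_matchings (stubs V E). Q P})
                   / real (card (perfect_matchings (stubs V E)))"

definition dprod :: "int \<Rightarrow> nat \<Rightarrow> real" where
  "dprod M t = (\<Prod>p = 1..t. 2 * real_of_int M + 1 - 2 * real p)"

definition A_fun :: "nat \<Rightarrow> nat \<Rightarrow> int \<Rightarrow> real" where
  "A_fun a b M = (\<Sum>t = 1..min a b. (-1) ^ (t + 1) *
      (real (a choose t) * real (b choose t) * fact t) / dprod M t)"

definition C_fun :: "nat \<Rightarrow> nat \<Rightarrow> nat \<Rightarrow> int \<Rightarrow> real" where
  "C_fun a b c M = (\<Sum>t = 1..min b (c - 1). (-1) ^ (t + 1) * A_fun a (c - t) (M - int t) *
      (real (c choose t) * real (b choose t) * fact t) / dprod M t)"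

definition T_fun :: "nat \<Rightarrow> nat \<Rightarrow> nat \<Rightarrow> int \<Rightarrow> real" where
  "T_fun a b c M = (\<Sum>t = 1..min (a - 1) (b - 1). (-1) ^ (t + 1) * C_fun (a - t) (b - t) c (M - int t) *
      (real (a choose t) * real (b choose t) * fact t) / dprod M t)"

end

theory Submission
  imports Defs "HOL-Library.FuncSet"
begin


abbreviation PM where "PM \<equiv> perfect_matchings"

lemma PM_iff: "P \<in> PM S \<longleftrightarrow> \<Union>P = S \<and> disjoint P \<and> {} \<notin> P \<and> (\<forall>b\<in>P. card b = 2)"
  by (auto simp: perfect_matchings_def partition_on_def)

lemma disj_same: "disjoint A \<Longrightarrow> a \<in> A \<Longrightarrow> b \<in> A \<Longrightarrow> x \<in> a \<Longrightarrow> x \<in> b \<Longrightarrow> a = b"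
  using disjointD by fastforce

lemma PM_finite: "finite S \<Longrightarrow> finite (PM S)"
proof -
  assume "finite S"
  have "PM S \<subseteq> Pow (Pow S)" by (auto simp: PM_iff)
  then show ?thesis using \<open>finite S\<close> finite_subset by blast
qed

lemma restr_bij:
  assumes fin: "finite S" and I2: "\<forall>b\<in>I. card b = 2" and IS: "\<Union>I \<subseteq> S" and dI: "disjoint I"
  shows "{P \<in> PM S. I \<subseteq> P \<and> R P} = (\<lambda>P'. P' \<union> I) ` {P' \<in> PM (S - \<Union>I). R (P' \<union> I)}"
    and "inj_on (\<lambda>P'. P' \<union> I) {P' \<in> PM (S - \<Union>I). R (P' \<union> I)}"
proof -
  have A: "P' \<inter> I = {}" if "P' \<in> PM (S - \<Union>I)" for P'
  proof (rule ccontr)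
    assume "P' \<inter> I \<noteq> {}"
    then obtain b where "b \<in> P'" "b \<in> I" by auto
    with that have "b \<subseteq> S - \<Union>I" "b \<noteq> {}" by (auto simp: PM_iff)
    with \<open>b \<in> I\<close> show False by auto
  qed
  show "inj_on (\<lambda>P'. P' \<union> I) {P' \<in> PM (S - \<Union>I). R (P' \<union> I)}"
  proof (rule inj_onI)
    fix x y assume "x \<in> {P' \<in> PM (S - \<Union>I). R (P' \<union> I)}" "y \<in> {P' \<in> PM (S - \<Union>I). R (P' \<union> I)}"
      "x \<union> I = y \<union> I"
    with A[of x] A[of y] show "x = y" by blast
  qed
  show "{P \<in> PM S. I \<subseteq> P \<and> R P} = (\<lambda>P'. P' \<union> I) ` {P' \<in> PM (S - \<Union>I). R (P' \<union> I)}"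
  proof (intro equalityI subsetI)
    fix P assume "P \<in> {P \<in> PM S. I \<subseteq> P \<and> R P}"
    then have P: "P \<in> PM S" "I \<subseteq> P" "R P" by auto
    have eq: "(P - I) \<union> I = P" using P by auto
    have "P - I \<in> PM (S - \<Union>I)"
    proof -
      have d: "disjoint P" using P by (auto simp: PM_iff)
      have "\<Union>(P - I) = S - \<Union>I"
      proof (intro equalityI subsetI)
        fix x assume "x \<in> \<Union>(P - I)"
        then obtain b where b: "b \<in> P" "b \<notin> I" "x \<in> b" by auto
        have "x \<notin> \<Union>I"
        proof
          assume "x \<in> \<Union>I"
          then obtain c where "c \<in> I" "x \<in> c" by auto
          then have "c \<in> P" "b \<noteq> c" using P(2) b by auto
          then show False using disj_same[OF d b(1) \<open>c \<in> P\<close> b(3) \<open>x \<in> c\<close>] by simp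
        qed
        then show "x \<in> S - \<Union>I" using b P(1) by (auto simp: PM_iff)
      next
        fix x assume "x \<in> S - \<Union>I"
        then show "x \<in> \<Union>(P - I)" using P(1) by (auto simp: PM_iff)
      qed
      moreover have "disjoint (P - I)" using d by (meson DiffD1 disjointD disjointI)
      ultimately show ?thesis using P(1) by (auto simp: PM_iff)
    qed
    then show "P \<in> (\<lambda>P'. P' \<union> I) ` {P' \<in> PM (S - \<Union>I). R (P' \<union> I)}"
      using eq P(3) by (metis (mono_tags, lifting) image_eqI mem_Collect_eq)
  next
    fix P assume "P \<in> (\<lambda>P'. P' \<union> I) ` {P' \<in> PM (S - \<Union>I). R (P' \<union> I)}"
    then obtain P' where P': "P' \<in> PM (S - \<Union>I)" "R (P' \<union> I)" "P = P' \<union> I" by auto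
    have "P' \<union> I \<in> PM S"
    proof -
      have u: "\<Union>(P' \<union> I) = S" using P' IS by (auto simp: PM_iff)
      have d: "disjoint (P' \<union> I)"
      proof (rule disjoint_union)
        show "disjoint P'" using P' by (auto simp: PM_iff)
        show "disjoint I" by fact
        show "\<Union>P' \<inter> \<Union>I = {}" using P' by (auto simp: PM_iff)
      qed
      have "{} \<notin> I" using I2 by fastforce
      then show ?thesis using u d P' I2 by (auto simp: PM_iff)
    qed
    then show "P \<in> {P \<in> PM S. I \<subseteq> P \<and> R P}" using P' by auto
  qed
qed

lemma restr_card:
  assumes "finite S" "\<forall>b\<in>I. card b = 2" "\<Union>I \<subseteq> S" "disjoint I"
  shows "card {P \<in> PM S. I \<subseteq> P \<and> R P} = card {P' \<in> PM (S - \<Union>I). R (P' \<union> I)}"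
  by (simp only: restr_bij(1)[OF assms] card_image[OF restr_bij(2)[OF assms]])

lemma notdisj_empty:
  assumes "\<not> disjoint I"
  shows "{P \<in> PM S. I \<subseteq> P \<and> R P} = {}"
proof (rule ccontr)
  assume "{P \<in> PM S. I \<subseteq> P \<and> R P} \<noteq> {}"
  then obtain P where "P \<in> PM S" "I \<subseteq> P" by auto
  then have "disjoint P" by (auto simp: PM_iff)
  have "disjoint I"
  proof (rule disjointI)
    fix a b assume "a \<in> I" "b \<in> I" "a \<noteq> b"
    then show "a \<inter> b = {}" using disjointD[OF \<open>disjoint P\<close>] \<open>I \<subseteq> P\<close> by blast
  qed
  then show False using assms by simp
qed

fun NN :: "nat \<Rightarrow> nat" where
  "NN 0 = 1" | "NN (Suc n) = (2 * n + 1) * NN n"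

lemma NN_pos: "NN n > 0" by (induction n) auto

lemma PM_card: "finite S \<Longrightarrow> card S = 2 * n \<Longrightarrow> card (PM S) = NN n"
proof (induction n arbitrary: S)
  case 0
  then have "S = {}" by auto
  have e: "PM {} = {{}}" by (auto simp: PM_iff)
  show ?case by (simp only: \<open>S = {}\<close> e) simp
next
  case (Suc n)
  have "card S \<noteq> 0" using Suc.prems(2) by simp
  then have "S \<noteq> {}" by (metis card.empty)
  then obtain x where x: "x \<in> S" by blast
  define B where "B = (\<lambda>y. {P \<in> PM S. {{x, y}} \<subseteq> P \<and> True})"
  have U: "PM S = (\<Union>y\<in>S - {x}. B y)"
  proof (intro equalityI subsetI)
    fix P assume P: "P \<in> PM S"
    then obtain b where b: "b \<in> P" "x \<in> b" using x by (auto simp: PM_iff)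
    then have "card b = 2" using P by (auto simp: PM_iff)
    then obtain u v where uv: "b = {u, v}" "u \<noteq> v" by (meson card_2_iff)
    obtain y where y: "b = {x, y}" "y \<noteq> x"
    proof (cases "u = x")
      case True
      then show ?thesis using that uv by blast
    next
      case False
      then have "v = x" using uv b by blast
      then show ?thesis using that uv by (metis insert_commute)
    qed
    have "y \<in> S" using P b y by (auto simp: PM_iff)
    then show "P \<in> (\<Union>y\<in>S - {x}. B y)" using P b y unfolding B_def by auto
  next
    fix P assume "P \<in> (\<Union>y\<in>S - {x}. B y)"
    then show "P \<in> PM S" unfolding B_def by auto
  qed
  have C: "card (B y) = NN n" if y: "y \<in> S - {x}" for y
  proof -
    have c2: "\<forall>b\<in>{{x,y}}. card b = 2" using y by auto
    have sub: "\<Union>{{x,y}} \<subseteq> S" using x y by auto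
    have dj: "disjoint {{x,y}}" by (simp add: disjoint_def)
    have "card (B y) = card {P' \<in> PM (S - \<Union>{{x,y}}). True}"
      unfolding B_def by (rule restr_card[OF Suc.prems(1) c2 sub dj])
    also have "\<dots> = card (PM (S - {x,y}))" by simp
    also have "\<dots> = NN n"
    proof (rule Suc.IH)
      show "finite (S - {x, y})" using Suc.prems(1) by simp
      have "card (S - {x,y}) = card S - card {x,y}" using x y Suc.prems(1) by (intro card_Diff_subset) auto
      moreover have "card {x,y} = 2" using y by auto
      ultimately show "card (S - {x, y}) = 2 * n" using Suc.prems(2) by simp
    qed
    finally show ?thesis .
  qed
  have "card (PM S) = (\<Sum>y\<in>S - {x}. card (B y))"
    unfolding U
  proof (rule card_UN_disjoint)
    show "finite (S - {x})" using Suc.prems(1) by simp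
    show "\<forall>y\<in>S - {x}. finite (B y)" using PM_finite[OF Suc.prems(1)] unfolding B_def by simp
    show "\<forall>i\<in>S - {x}. \<forall>j\<in>S - {x}. i \<noteq> j \<longrightarrow> B i \<inter> B j = {}"
    proof (intro ballI impI)
      fix i j assume ij: "i \<in> S - {x}" "j \<in> S - {x}" "i \<noteq> j"
      show "B i \<inter> B j = {}"
      proof (rule ccontr)
        assume "B i \<inter> B j \<noteq> {}"
        then obtain P where P: "P \<in> PM S" "{x,i} \<in> P" "{x,j} \<in> P" unfolding B_def by auto
        then have "disjoint P" by (simp add: PM_iff)
        then have "{x,i} = {x,j}" using disj_same[of P "{x,i}" "{x,j}" x] P by simp
        then show False using ij by (metis doubleton_eq_iff)
      qed
    qed
  qed
  also have "\<dots> = (\<Sum>y\<in>S - {x}. NN n)" using C by simp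
  also have "\<dots> = (2 * n + 1) * NN n" using Suc.prems x by simp
  finally show ?case by simp
qed



definition pairs :: "'b set \<Rightarrow> 'b set \<Rightarrow> 'b set set" where
  "pairs X Y = {{x, y} | x y. x \<in> X \<and> y \<in> Y}"

lemma ffact_choose: "(\<Prod>i\<in>{0..<t}. b - i) = (b choose t) * fact t"
proof (induction t)
  case 0
  then show ?case by simp
next
  case (Suc t)
  have e: "Suc t * (b choose Suc t) = (b - t) * (b choose t)"
    using binomial_absorb_comp binomial_absorption by presburger
  have "(\<Prod>i\<in>{0..<Suc t}. b - i) = (b choose t) * fact t * (b - t)"
    using Suc by simp
  also have "\<dots> = (Suc t * (b choose Suc t)) * fact t" using e by simp
  also have "\<dots> = (b choose Suc t) * fact (Suc t)" by (simp add: algebra_simps)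
  finally show ?case .
qed

lemma sum_subsets_by_card:
  fixes \<phi> :: "nat \<Rightarrow> real"
  assumes "finite X"
  shows "(\<Sum>U | U \<subseteq> X \<and> U \<noteq> {}. \<phi> (card U)) = (\<Sum>t = 1..card X. real (card X choose t) * \<phi> t)"
proof -
  let ?S = "{U. U \<subseteq> X \<and> U \<noteq> {}}"
  have fS: "finite ?S" using assms by simp
  have im: "card ` ?S \<subseteq> {1..card X}"
  proof
    fix t assume "t \<in> card ` ?S"
    then obtain U where U: "U \<subseteq> X" "U \<noteq> {}" "t = card U" by auto
    then have "finite U" using assms finite_subset by blast
    then have "card U \<ge> 1" using U by (simp add: Suc_leI card_gt_0_iff)
    moreover have "card U \<le> card X" using U assms by (simp add: card_mono)
    ultimately show "t \<in> {1..card X}" using U by simp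
  qed
  have "(\<Sum>U\<in>?S. \<phi> (card U)) = (\<Sum>t\<in>{1..card X}. \<Sum>U\<in>{U \<in> ?S. card U = t}. \<phi> (card U))"
    by (rule sum.group[OF fS _ im, symmetric]) simp
  also have "\<dots> = (\<Sum>t = 1..card X. real (card X choose t) * \<phi> t)"
  proof (rule sum.cong[OF refl])
    fix t assume t: "t \<in> {1..card X}"
    have e: "{U \<in> ?S. card U = t} = {U. U \<subseteq> X \<and> card U = t}"
      using t by auto
    have "(\<Sum>U\<in>{U \<in> ?S. card U = t}. \<phi> (card U)) = (\<Sum>U\<in>{U. U \<subseteq> X \<and> card U = t}. \<phi> t)"
      unfolding e by simp
    also have "\<dots> = real (card {U. U \<subseteq> X \<and> card U = t}) * \<phi> t" by simp
    also have "\<dots> = real (card X choose t) * \<phi> t" using n_subsets[OF assms] by simp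
    finally show "(\<Sum>U\<in>{U \<in> ?S. card U = t}. \<phi> (card U)) = real (card X choose t) * \<phi> t" .
  qed
  finally show ?thesis by simp
qed



lemma pair_elem_X:
  assumes XY: "X \<inter> Y = {}" and e: "e \<in> pairs X Y" and z: "z \<in> e" "z \<in> X"
  shows "\<exists>y\<in>Y. e = {z, y}"
proof -
  obtain x y where "e = {x,y}" "x \<in> X" "y \<in> Y" using e unfolding pairs_def by blast
  then show ?thesis using z XY by auto
qed

lemma pair_elem_Y:
  assumes XY: "X \<inter> Y = {}" and e: "e \<in> pairs X Y" and z: "z \<in> e" "z \<in> Y"
  shows "\<exists>x\<in>X. e = {x, z}"
proof -
  obtain x y where "e = {x,y}" "x \<in> X" "y \<in> Y" using e unfolding pairs_def by blast
  then show ?thesis using z XY by auto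
qed

locale phi_setup =
  fixes X Y :: "'b set"
  assumes XY: "X \<inter> Y = {}"
begin

definition Dom where "Dom = Sigma {U. U \<subseteq> X \<and> U \<noteq> {}} (\<lambda>U. {f \<in> U \<rightarrow>\<^sub>E Y. inj_on f U})"
definition Phi where "Phi p = (\<lambda>x. {x, snd p x}) ` fst p"

lemma Phi_card: assumes "p \<in> Dom" shows "card (Phi p) = card (fst p)"
proof -
  obtain U f where p: "p = (U, f)" "U \<subseteq> X" "f \<in> U \<rightarrow>\<^sub>E Y" using assms unfolding Dom_def by auto
  have "inj_on (\<lambda>x. {x, f x}) U"
  proof (rule inj_onI)
    fix a b assume ab: "a \<in> U" "b \<in> U" "{a, f a} = {b, f b}"
    have "f b \<in> Y" using p ab by auto
    then have "a \<noteq> f b" using ab p XY by auto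
    then show "a = b" using ab by (metis doubleton_eq_iff)
  qed
  then show ?thesis using p unfolding Phi_def by (simp add: card_image)
qed

lemma Phi_inj: "inj_on Phi Dom"
proof (rule inj_onI)
  fix p q assume pq: "p \<in> Dom" "q \<in> Dom" "Phi p = Phi q"
  obtain U f where p: "p = (U, f)" "U \<subseteq> X" "f \<in> U \<rightarrow>\<^sub>E Y" using pq unfolding Dom_def by auto
  obtain U' g where q: "q = (U', g)" "U' \<subseteq> X" "g \<in> U' \<rightarrow>\<^sub>E Y" using pq unfolding Dom_def by auto
  have u1: "X \<inter> \<Union>(Phi p) = U" using p XY unfolding Phi_def by auto
  have u2: "X \<inter> \<Union>(Phi q) = U'" using q XY unfolding Phi_def by auto
  have UU: "U = U'" using u1 u2 pq by simp
  have "f = g"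
  proof (rule extensionalityI)
    show "f \<in> extensional U" using p by (simp add: PiE_iff)
    show "g \<in> extensional U" using q UU by (simp add: PiE_iff)
    fix x assume x: "x \<in> U"
    have "{x, f x} \<in> Phi q" using pq x p unfolding Phi_def by auto
    then obtain x' where x': "x' \<in> U'" "{x, f x} = {x', g x'}" using q unfolding Phi_def by auto
    have "g x' \<in> Y" using q x' by auto
    then have "x \<noteq> g x'" using x p XY by auto
    then have "x = x'" "f x = g x'" using x' by (metis doubleton_eq_iff)+
    then show "f x = g x" by simp
  qed
  then show "p = q" using p q UU by simp
qed

lemma Phi_image:
  "Phi ` Dom = {I. I \<subseteq> pairs X Y \<and> I \<noteq> {} \<and> disjoint I}"
proof (intro equalityI subsetI)
  fix I assume "I \<in> Phi ` Dom"
  then obtain U f where I: "I = Phi (U, f)" "U \<subseteq> X" "U \<noteq> {}" "f \<in> U \<rightarrow>\<^sub>E Y" "inj_on f U"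
    unfolding Dom_def by auto
  have "I \<subseteq> pairs X Y" using I unfolding Phi_def pairs_def by auto
  moreover have "I \<noteq> {}" using I unfolding Phi_def by auto
  moreover have "disjoint I"
  proof (rule disjointI)
    fix a b assume ab: "a \<in> I" "b \<in> I" "a \<noteq> b"
    then obtain x1 x2 where x: "x1 \<in> U" "x2 \<in> U" "a = {x1, f x1}" "b = {x2, f x2}"
      using I unfolding Phi_def by auto
    have "x1 \<noteq> x2" using x ab by auto
    then have "f x1 \<noteq> f x2" using I(5) x by (meson inj_onD)
    moreover have "x1 \<notin> Y" "x2 \<notin> Y" using x I XY by auto
    moreover have "f x1 \<in> Y" "f x2 \<in> Y" using x I by auto
    ultimately show "a \<inter> b = {}" using x \<open>x1 \<noteq> x2\<close> by auto
  qed
  ultimately show "I \<in> {I. I \<subseteq> pairs X Y \<and> I \<noteq> {} \<and> disjoint I}" by simp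
next
  fix I assume "I \<in> {I. I \<subseteq> pairs X Y \<and> I \<noteq> {} \<and> disjoint I}"
  then have I: "I \<subseteq> pairs X Y" "I \<noteq> {}" "disjoint I" by auto
  define U where "U = X \<inter> \<Union>I"
  have ex: "\<exists>y\<in>Y. {x, y} \<in> I" if xU: "x \<in> U" for x
  proof -
    obtain e where e: "e \<in> I" "x \<in> e" "x \<in> X" using xU unfolding U_def by auto
    then obtain y where "y \<in> Y" "e = {x, y}" using pair_elem_X[OF XY] I(1) by blast
    then show ?thesis using e by auto
  qed
  have uniq: "y1 = y2" if "{x, y1} \<in> I" "{x, y2} \<in> I" "x \<in> X" "y1 \<in> Y" "y2 \<in> Y" for x y1 y2
  proof -
    have "{x, y1} = {x, y2}" using disj_same[OF I(3) that(1) that(2), of x] by simp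
    moreover have "x \<noteq> y1" using that XY by auto
    ultimately show ?thesis by (metis doubleton_eq_iff)
  qed
  define f where "f = (\<lambda>x\<in>U. THE y. y \<in> Y \<and> {x, y} \<in> I)"
  have fx: "f x \<in> Y \<and> {x, f x} \<in> I" if xU: "x \<in> U" for x
  proof -
    obtain y where y: "y \<in> Y" "{x, y} \<in> I" using ex[OF xU] by blast
    have xX: "x \<in> X" using xU unfolding U_def by auto
    have "(THE y. y \<in> Y \<and> {x, y} \<in> I) = y"
      by (rule the_equality) (use y uniq xX in auto)
    then show ?thesis using xU y unfolding f_def by simp
  qed
  have fPi: "f \<in> U \<rightarrow>\<^sub>E Y" using fx unfolding f_def by auto
  have finj: "inj_on f U"
  proof (rule inj_onI)
    fix a b assume ab: "a \<in> U" "b \<in> U" "f a = f b"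
    have "{a, f a} = {b, f b}" using disj_same[OF I(3) conjunct2[OF fx[OF ab(1)]] conjunct2[OF fx[OF ab(2)]], of "f a"] ab(3) by simp
    moreover have "a \<noteq> f b" using ab fx XY unfolding U_def by blast
    ultimately show "a = b" by (metis doubleton_eq_iff)
  qed
  have UX: "U \<subseteq> X" "U \<noteq> {}"
  proof -
    show "U \<subseteq> X" unfolding U_def by auto
    obtain e where "e \<in> I" using I(2) by auto
    then obtain x y where "e = {x, y}" "x \<in> X" using I(1) unfolding pairs_def by blast
    then show "U \<noteq> {}" using \<open>e \<in> I\<close> unfolding U_def by auto
  qed
  have "Phi (U, f) = I"
  proof (intro equalityI subsetI)
    fix e assume "e \<in> Phi (U, f)"
    then show "e \<in> I" using fx unfolding Phi_def by auto
  next
    fix e assume e: "e \<in> I"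
    then obtain x y where xy: "e = {x, y}" "x \<in> X" "y \<in> Y" using I(1) unfolding pairs_def by blast
    have xU: "x \<in> U" using e xy unfolding U_def by auto
    have "f x = y" using uniq[of x "f x" y] fx[OF xU] e xy by simp
    then show "e \<in> Phi (U, f)" using xU xy unfolding Phi_def by auto
  qed
  moreover have "(U, f) \<in> Dom" using UX fPi finj unfolding Dom_def by auto
  ultimately show "I \<in> Phi ` Dom" by (metis image_eqI)
qed

end



lemma pairs_finite: "finite X \<Longrightarrow> finite Y \<Longrightarrow> finite (pairs X Y)"
proof -
  assume "finite X" "finite Y"
  have "pairs X Y = (\<lambda>(x,y). {x,y}) ` (X \<times> Y)" unfolding pairs_def by auto
  then show ?thesis using \<open>finite X\<close> \<open>finite Y\<close> by simp
qed

lemma count_sum: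
  fixes g :: "nat \<Rightarrow> real"
  assumes XY: "X \<inter> Y = {}" and fX: "finite X" and fY: "finite Y"
  shows "(\<Sum>I | I \<subseteq> pairs X Y \<and> I \<noteq> {}. if disjoint I then g (card I) else 0)
       = (\<Sum>t = 1..min (card X) (card Y). real (card X choose t) * real (card Y choose t) * fact t * g t)"
proof -
  interpret phi_setup X Y by unfold_locales (rule XY)
  let ?A = "{I. I \<subseteq> pairs X Y \<and> I \<noteq> {}}"
  let ?D = "{I. I \<subseteq> pairs X Y \<and> I \<noteq> {} \<and> disjoint I}"
  have fA: "finite ?A" using pairs_finite[OF fX fY] by simp
  have "(\<Sum>I\<in>?A. if disjoint I then g (card I) else 0) = (\<Sum>I\<in>{I \<in> ?A. disjoint I}. g (card I))"
    by (rule sum.inter_filter[OF fA, symmetric])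
  also have "{I \<in> ?A. disjoint I} = ?D" by auto
  also have "?D = Phi ` Dom" by (rule Phi_image[symmetric])
  also have "(\<Sum>I\<in>Phi ` Dom. g (card I)) = (\<Sum>p\<in>Dom. g (card (Phi p)))"
    by (rule sum.reindex[OF Phi_inj, unfolded comp_def])
  also have "\<dots> = (\<Sum>p\<in>Dom. g (card (fst p)))"
    using Phi_card by (intro sum.cong) auto
  also have "\<dots> = (\<Sum>p\<in>Dom. case_prod (\<lambda>U f. g (card U)) p)" by (simp add: split_beta)
  also have "\<dots> = (\<Sum>U | U \<subseteq> X \<and> U \<noteq> {}. \<Sum>f\<in>{f \<in> U \<rightarrow>\<^sub>E Y. inj_on f U}. g (card U))"
    unfolding Dom_def
  proof (rule sum.Sigma[symmetric])
    show "finite {U. U \<subseteq> X \<and> U \<noteq> {}}" using fX by simp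
    show "\<forall>U\<in>{U. U \<subseteq> X \<and> U \<noteq> {}}. finite {f \<in> U \<rightarrow>\<^sub>E Y. inj_on f U}"
    proof
      fix U assume "U \<in> {U. U \<subseteq> X \<and> U \<noteq> {}}"
      then have "finite U" using fX finite_subset by auto
      then have "finite (U \<rightarrow>\<^sub>E Y)" using fY by (simp add: finite_PiE)
      then show "finite {f \<in> U \<rightarrow>\<^sub>E Y. inj_on f U}" by simp
    qed
  qed
  also have "\<dots> = (\<Sum>U | U \<subseteq> X \<and> U \<noteq> {}. real ((card Y choose card U) * fact (card U)) * g (card U))"
  proof (rule sum.cong[OF refl])
    fix U assume "U \<in> {U. U \<subseteq> X \<and> U \<noteq> {}}"
    then have "finite U" using fX finite_subset by auto
    have "card {f \<in> U \<rightarrow>\<^sub>E Y. inj_on f U} = card Y ^ (card U - card U) * prod ((-) (card Y)) {0..<card U}"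
      by (rule card_inj_on_subset_funcset[OF \<open>finite U\<close> fY subset_refl])
    also have "\<dots> = (card Y choose card U) * fact (card U)" using ffact_choose by simp
    finally show "(\<Sum>f\<in>{f \<in> U \<rightarrow>\<^sub>E Y. inj_on f U}. g (card U)) = real ((card Y choose card U) * fact (card U)) * g (card U)"
      by simp
  qed
  also have "\<dots> = (\<Sum>t = 1..card X. real (card X choose t) * (real ((card Y choose t) * fact t) * g t))"
    by (rule sum_subsets_by_card[OF fX])
  also have "\<dots> = (\<Sum>t = 1..min (card X) (card Y). real (card X choose t) * (real ((card Y choose t) * fact t) * g t))"
  proof -
    define \<psi> where "\<psi> = (\<lambda>t. real (card X choose t) * (real ((card Y choose t) * fact t) * g t))"
    have z: "\<forall>t\<in>{1..card X} - {1..min (card X) (card Y)}. \<psi> t = 0"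
    proof
      fix t assume "t \<in> {1..card X} - {1..min (card X) (card Y)}"
      then have "card Y < t" by auto
      then have "card Y choose t = 0" by simp
      then show "\<psi> t = 0" unfolding \<psi>_def by simp
    qed
    have "sum \<psi> {1..card X} = sum \<psi> {1..min (card X) (card Y)}"
      by (rule sum.mono_neutral_right[OF _ _ z]) auto
    then show ?thesis unfolding \<psi>_def .
  qed
  also have "\<dots> = (\<Sum>t = 1..min (card X) (card Y). real (card X choose t) * real (card Y choose t) * fact t * g t)"
    by (intro sum.cong) (simp_all add: algebra_simps)
  finally show ?thesis by simp
qed



definition conn :: "'b set set \<Rightarrow> 'b set \<Rightarrow> 'b set \<Rightarrow> bool" where
  "conn P X Y \<longleftrightarrow> (\<exists>b\<in>P. b \<inter> X \<noteq> {} \<and> b \<inter> Y \<noteq> {})"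

lemma conn_pairs:
  assumes P: "P \<in> PM S" and XY: "X \<inter> Y = {}"
  shows "conn P X Y \<longleftrightarrow> (\<exists>e\<in>pairs X Y. e \<in> P)"
proof
  assume "conn P X Y"
  then obtain b where b0: "b \<in> P" "b \<inter> X \<noteq> {}" "b \<inter> Y \<noteq> {}" unfolding conn_def by (elim bexE conjE)
  then obtain x y where b: "b \<in> P" "x \<in> b" "x \<in> X" "y \<in> b" "y \<in> Y" by (meson disjoint_iff)
  have c: "card b = 2" using P b by (simp add: PM_iff)
  have "x \<noteq> y" using b XY by auto
  then have c2: "card {x, y} = 2" by simp
  have fb: "finite b" by (rule card_ge_0_finite) (simp add: c)
  have sub: "{x, y} \<subseteq> b" using b by simp
  have cc: "card {x, y} = card b" using c c2 by simp
  have "{x, y} = b" by (rule card_subset_eq[OF fb sub cc])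
  moreover have "{x, y} \<in> pairs X Y" unfolding pairs_def using b by blast
  ultimately show "\<exists>e\<in>pairs X Y. e \<in> P" using b(1) by (intro bexI[of _ b]) simp_all
next
  assume "\<exists>e\<in>pairs X Y. e \<in> P"
  then obtain x y where xy: "{x, y} \<in> P" "x \<in> X" "y \<in> Y" unfolding pairs_def by blast
  have "{x, y} \<inter> X \<noteq> {}" "{x, y} \<inter> Y \<noteq> {}" using xy by auto
  then show "conn P X Y" unfolding conn_def by (intro bexI[OF _ xy(1)] conjI)
qed

lemma IE:
  fixes S :: "'a set" and F :: "'a set set"
  assumes fS: "finite S" and fF: "finite F"
  shows "real (card {P \<in> PM S. (\<exists>e\<in>F. e \<in> P) \<and> R P})
       = (\<Sum>I | I \<subseteq> F \<and> I \<noteq> {}. (-1) ^ (card I + 1) * real (card {P \<in> PM S. I \<subseteq> P \<and> R P}))"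
proof -
  define \<Omega> where "\<Omega> = {P \<in> PM S. R P}"
  have f\<Omega>: "finite \<Omega>" unfolding \<Omega>_def by (rule finite_subset[OF _ PM_finite[OF fS]]) blast
  define f where "f = (\<lambda>Z. real (card (Z \<inter> \<Omega>)))"
  define G where "G = (\<lambda>e::'a set. {P::'a set set. e \<in> P})"
  have add: "f (A \<union> B) = f A + f B" if "disjnt A B" for A B
  proof -
    have "(A \<union> B) \<inter> \<Omega> = (A \<inter> \<Omega>) \<union> (B \<inter> \<Omega>)" by auto
    moreover have "(A \<inter> \<Omega>) \<inter> (B \<inter> \<Omega>) = {}" using that by (auto simp: disjnt_def)
    moreover have "finite (A \<inter> \<Omega>)" "finite (B \<inter> \<Omega>)" using f\<Omega> by auto
    ultimately show ?thesis unfolding f_def by (simp add: card_Un_disjoint)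
  qed
  have ie: "f (\<Union>(G ` F)) = (\<Sum>B | B \<subseteq> F \<and> B \<noteq> {}. (-1) ^ (card B + 1) * f (\<Inter>(G ` B)))"
    by (rule Incl_Excl_UN[OF add fF])
  have l: "\<Union>(G ` F) \<inter> \<Omega> = {P \<in> PM S. (\<exists>e\<in>F. e \<in> P) \<and> R P}"
    unfolding G_def \<Omega>_def by auto
  have r: "\<Inter>(G ` B) \<inter> \<Omega> = {P \<in> PM S. B \<subseteq> P \<and> R P}" if "B \<noteq> {}" for B
    using that unfolding G_def \<Omega>_def by auto
  show ?thesis
    using ie unfolding f_def l
    by (simp add: r)
qed

lemma IE_main:
  fixes h :: "nat \<Rightarrow> real"
  assumes fS: "finite S" and fX: "finite X" and fY: "finite Y" and XY: "X \<inter> Y = {}"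
    and h: "\<And>I. I \<subseteq> pairs X Y \<Longrightarrow> I \<noteq> {} \<Longrightarrow> disjoint I \<Longrightarrow>
             real (card {P \<in> PM S. I \<subseteq> P \<and> R P}) = h (card I)"
  shows "real (card {P \<in> PM S. conn P X Y \<and> R P})
       = (\<Sum>t = 1..min (card X) (card Y). real (card X choose t) * real (card Y choose t) * fact t * ((-1) ^ (t + 1) * h t))"
proof -
  have "{P \<in> PM S. conn P X Y \<and> R P} = {P \<in> PM S. (\<exists>e\<in>pairs X Y. e \<in> P) \<and> R P}"
    using conn_pairs[OF _ XY] by blast
  then have "real (card {P \<in> PM S. conn P X Y \<and> R P})
     = (\<Sum>I | I \<subseteq> pairs X Y \<and> I \<noteq> {}. (-1) ^ (card I + 1) * real (card {P \<in> PM S. I \<subseteq> P \<and> R P}))"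
    using IE[OF fS pairs_finite[OF fX fY], of R] by simp
  also have "\<dots> = (\<Sum>I | I \<subseteq> pairs X Y \<and> I \<noteq> {}. if disjoint I then (-1) ^ (card I + 1) * h (card I) else 0)"
  proof (rule sum.cong[OF refl])
    fix I assume I: "I \<in> {I. I \<subseteq> pairs X Y \<and> I \<noteq> {}}"
    show "(-1) ^ (card I + 1) * real (card {P \<in> PM S. I \<subseteq> P \<and> R P})
        = (if disjoint I then (-1) ^ (card I + 1) * h (card I) else 0)"
    proof (cases "disjoint I")
      case True
      then show ?thesis using h I by simp
    next
      case False
      have e: "{P \<in> PM S. I \<subseteq> P \<and> R P} = {}" by (rule notdisj_empty[OF False])
      show ?thesis by (simp only: e False) simp
    qed
  qed
  also have "\<dots> = (\<Sum>t = 1..min (card X) (card Y). real (card X choose t) * real (card Y choose t) * fact t * ((-1) ^ (t + 1) * h t))"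
    by (rule count_sum[OF XY fX fY])
  finally show ?thesis .
qed



lemma NN_dprod: "t \<le> n \<Longrightarrow> real (NN n) = dprod (int n) t * real (NN (n - t))"
proof (induction t)
  case 0
  then show ?case by (simp add: dprod_def)
next
  case (Suc t)
  then have IH: "real (NN n) = dprod (int n) t * real (NN (n - t))" by simp
  have d: "dprod (int n) (Suc t) = (2 * real n + 1 - 2 * real (Suc t)) * dprod (int n) t"
    unfolding dprod_def by (subst prod.nat_ivl_Suc') simp_all
  have "n - t > 0" using Suc.prems by simp
  then obtain k where k: "n - t = Suc k" using gr0_implies_Suc by blast
  have k2: "n - Suc t = k" using k by simp
  have "real (NN (n - t)) = (2 * real k + 1) * real (NN k)" using k by (simp add: algebra_simps)
  moreover have "n = t + Suc k" using k Suc.prems by arith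
  then have "real n = real t + real k + 1" by simp
  then have "2 * real k + 1 = 2 * real n + 1 - 2 * real (Suc t)" by simp
  ultimately show ?case using IH d k2 by simp
qed

lemma dprod_pos: "t \<le> n \<Longrightarrow> dprod (int n) t > 0"
proof -
  assume "t \<le> n"
  have "real (NN n) > 0" "real (NN (n - t)) > 0" using NN_pos by simp_all
  then show ?thesis using NN_dprod[OF \<open>t \<le> n\<close>] by (simp add: zero_less_mult_iff)
qed

lemma term_eq:
  fixes x y :: real
  assumes "t \<le> n"
  shows "y * ((-1) ^ (t + 1) * (x * real (NN (n - t)))) = (-1) ^ (t + 1) * x * y / dprod (int n) t * real (NN n)"
proof -
  have p: "dprod (int n) t > 0" by (rule dprod_pos[OF assms])
  show ?thesis using NN_dprod[OF assms] p by (simp add: field_simps)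
qed

lemma pair_card2: assumes "X \<inter> Y = {}" "b \<in> pairs X Y" shows "card b = 2"
proof -
  obtain x y where xy: "b = {x, y}" "x \<in> X" "y \<in> Y" using assms(2) unfolding pairs_def by blast
  then have "x \<noteq> y" using assms(1) by blast
  then show ?thesis using xy by simp
qed

lemma pair_cardX:
  assumes "X \<inter> Y = {}" "b \<in> pairs X Y" shows "card (X \<inter> b) = 1" "card (Y \<inter> b) = 1"
proof -
  obtain x y where xy: "b = {x, y}" "x \<in> X" "y \<in> Y" using assms(2) unfolding pairs_def by blast
  have "X \<inter> b = {x}" "Y \<inter> b = {y}" using xy assms(1) by auto
  then show "card (X \<inter> b) = 1" "card (Y \<inter> b) = 1" by simp_all
qed

lemma card_side:
  assumes XY: "X \<inter> Y = {}" and I: "I \<subseteq> pairs X Y" "disjoint I" "finite I"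
  shows "card (X \<inter> \<Union>I) = card I" "card (Y \<inter> \<Union>I) = card I"
proof -
  have fin: "finite b" if "b \<in> I" for b
    by (rule card_ge_0_finite) (use pair_card2[OF XY] I that in auto)
  have dj: "\<forall>i\<in>I. \<forall>j\<in>I. i \<noteq> j \<longrightarrow> (Z \<inter> i) \<inter> (Z \<inter> j) = {}" for Z
    using I(2) by (auto dest: disjointD)
  have "card (\<Union>b\<in>I. X \<inter> b) = (\<Sum>b\<in>I. card (X \<inter> b))"
    by (rule card_UN_disjoint[OF I(3)]) (use fin dj in auto)
  also have "\<dots> = (\<Sum>b\<in>I. 1)" using pair_cardX(1)[OF XY] I(1) by (intro sum.cong) auto
  finally have "card (\<Union>b\<in>I. X \<inter> b) = card I" by simp
  moreover have "X \<inter> \<Union>I = (\<Union>b\<in>I. X \<inter> b)" by blast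
  ultimately show "card (X \<inter> \<Union>I) = card I" by (simp only:)
  have "card (\<Union>b\<in>I. Y \<inter> b) = (\<Sum>b\<in>I. card (Y \<inter> b))"
    by (rule card_UN_disjoint[OF I(3)]) (use fin dj in auto)
  also have "\<dots> = (\<Sum>b\<in>I. 1)" using pair_cardX(2)[OF XY] I(1) by (intro sum.cong) auto
  finally have "card (\<Union>b\<in>I. Y \<inter> b) = card I" by simp
  moreover have "Y \<inter> \<Union>I = (\<Union>b\<in>I. Y \<inter> b)" by blast
  ultimately show "card (Y \<inter> \<Union>I) = card I" by (simp only:)
qed

lemma resid:
  assumes fS: "finite S" and cS: "card S = 2 * n" and XS: "X \<subseteq> S" and YS: "Y \<subseteq> S" and XY: "X \<inter> Y = {}"
    and I: "I \<subseteq> pairs X Y" "disjoint I"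
  shows "\<forall>b\<in>I. card b = 2" "\<Union>I \<subseteq> S" "\<Union>I \<subseteq> X \<union> Y" "finite I"
    "card (S - \<Union>I) = 2 * (n - card I)" "card I \<le> n"
    "card (X - \<Union>I) = card X - card I" "card (Y - \<Union>I) = card Y - card I"
proof -
  show c2: "\<forall>b\<in>I. card b = 2" using pair_card2[OF XY] I by auto
  show u: "\<Union>I \<subseteq> X \<union> Y" using I unfolding pairs_def by auto
  then show uS: "\<Union>I \<subseteq> S" using XS YS by auto
  have fX: "finite X" "finite Y" using XS YS fS finite_subset by auto
  show fI: "finite I" using I(1) pairs_finite[OF fX] finite_subset by auto
  have fb: "finite b" if "b \<in> I" for b by (rule card_ge_0_finite) (use c2 that in auto)
  have cU: "card (\<Union>I) = 2 * card I"
  proof -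
    have "card (\<Union>I) = sum card I" by (rule card_Union_disjoint[OF I(2)]) (use fb in auto)
    also have "\<dots> = (\<Sum>b\<in>I. 2)" using c2 by (intro sum.cong) auto
    finally show ?thesis by simp
  qed
  have "card (S - \<Union>I) = card S - card (\<Union>I)" by (rule card_Diff_subset) (use fS uS finite_subset in auto)
  then show "card (S - \<Union>I) = 2 * (n - card I)" using cS cU by simp
  have "card (\<Union>I) \<le> card S" by (rule card_mono[OF fS uS])
  then show "card I \<le> n" using cS cU by simp
  have cs: "card (X \<inter> \<Union>I) = card I" "card (Y \<inter> \<Union>I) = card I" using card_side[OF XY I fI] by auto
  have "card (X - \<Union>I) = card X - card (X \<inter> \<Union>I)" by (rule card_Diff_subset_Int) (use fX fS uS finite_subset in auto)
  then show "card (X - \<Union>I) = card X - card I" using cs by simp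
  have "card (Y - \<Union>I) = card Y - card (Y \<inter> \<Union>I)" by (rule card_Diff_subset_Int) (use fX fS uS finite_subset in auto)
  then show "card (Y - \<Union>I) = card Y - card I" using cs by simp
qed

lemma conn_diff1: "P \<in> PM (S - U) \<Longrightarrow> conn P X Z \<longleftrightarrow> conn P (X - U) Z"
  unfolding conn_def PM_iff by blast

lemma conn_diff2: "P \<in> PM (S - U) \<Longrightarrow> conn P X Z \<longleftrightarrow> conn P X (Z - U)"
  unfolding conn_def PM_iff by blast

lemma conn_Un: "conn (P \<union> I) X Z \<longleftrightarrow> conn P X Z \<or> conn I X Z"
  unfolding conn_def by blast

lemma conn_I_false: "\<Union>I \<inter> X = {} \<Longrightarrow> \<not> conn I X Z"
  unfolding conn_def by blast

lemma conn_I_false2: "\<Union>I \<inter> Z = {} \<Longrightarrow> \<not> conn I X Z"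
  unfolding conn_def by blast



lemma A_fun_0: "A_fun a 0 M = 0" "A_fun 0 b M = 0"
  unfolding A_fun_def by simp_all

lemma C_fun_0: "C_fun 0 b c M = 0" "C_fun a 0 c M = 0"
  unfolding C_fun_def by (simp_all add: A_fun_0)

lemma min_le_n:
  assumes fS: "finite S" and cS: "card S = 2 * n" and XS: "X \<subseteq> S" and YS: "Y \<subseteq> S" and XY: "X \<inter> Y = {}"
  shows "min (card X) (card Y) \<le> n"
proof -
  have fX: "finite X" "finite Y" using XS YS fS finite_subset by auto
  have "card (X \<union> Y) = card X + card Y" using card_Un_disjoint[OF fX XY] by simp
  moreover have "card (X \<union> Y) \<le> card S" using XS YS fS by (intro card_mono) auto
  ultimately show ?thesis using cS by simp
qed

lemma L1:
  assumes fS: "finite S" and cS: "card S = 2 * n" and XS: "X \<subseteq> S" and YS: "Y \<subseteq> S" and XY: "X \<inter> Y = {}"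
  shows "real (card {P \<in> PM S. conn P X Y}) = A_fun (card X) (card Y) (int n) * real (NN n)"
proof -
  have fX: "finite X" "finite Y" using XS YS fS finite_subset by auto
  have h: "real (card {P \<in> PM S. I \<subseteq> P \<and> True}) = real (NN (n - card I))"
    if I: "I \<subseteq> pairs X Y" "I \<noteq> {}" "disjoint I" for I
  proof -
    note r = resid[OF fS cS XS YS XY I(1) I(3)]
    have "card {P \<in> PM S. I \<subseteq> P \<and> True} = card {P' \<in> PM (S - \<Union>I). True}"
      by (rule restr_card[OF fS r(1) r(2) I(3)])
    also have "\<dots> = card (PM (S - \<Union>I))" by simp
    also have "\<dots> = NN (n - card I)" by (rule PM_card) (use fS r(5) in auto)
    finally show ?thesis by simp
  qed
  have "real (card {P \<in> PM S. conn P X Y \<and> True})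
     = (\<Sum>t = 1..min (card X) (card Y). real (card X choose t) * real (card Y choose t) * fact t * ((-1) ^ (t + 1) * real (NN (n - t))))"
    by (rule IE_main[where R = "\<lambda>_. True" and h = "\<lambda>t. real (NN (n - t))", OF fS fX XY h])
  also have "\<dots> = (\<Sum>t = 1..min (card X) (card Y). (-1) ^ (t + 1) * (real (card X choose t) * real (card Y choose t) * fact t) / dprod (int n) t * real (NN n))"
  proof (rule sum.cong[OF refl])
    fix t assume t: "t \<in> {1..min (card X) (card Y)}"
    then have "t \<le> min (card X) (card Y)" by simp
    then have tn: "t \<le> n" using min_le_n[OF fS cS XS YS XY] by (rule order_trans)
    have p: "dprod (int n) t > 0" by (rule dprod_pos[OF tn])
    show "real (card X choose t) * real (card Y choose t) * fact t * ((-1) ^ (t + 1) * real (NN (n - t)))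
        = (-1) ^ (t + 1) * (real (card X choose t) * real (card Y choose t) * fact t) / dprod (int n) t * real (NN n)"
      using NN_dprod[OF tn] p by (simp add: field_simps)
  qed
  also have "\<dots> = A_fun (card X) (card Y) (int n) * real (NN n)"
    unfolding A_fun_def by (simp add: sum_distrib_right)
  finally show ?thesis by simp
qed

lemma L2:
  assumes fS: "finite S" and cS: "card S = 2 * n" and XS: "X \<subseteq> S" and YS: "Y \<subseteq> S" and ZS: "Z \<subseteq> S"
    and XY: "X \<inter> Y = {}" and XZ: "X \<inter> Z = {}" and YZ: "Y \<inter> Z = {}"
  shows "real (card {P \<in> PM S. conn P X Z \<and> conn P Y Z}) = C_fun (card X) (card Y) (card Z) (int n) * real (NN n)"
proof -
  have fX: "finite X" "finite Y" "finite Z" using XS YS ZS fS by (blast intro: finite_subset)+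
  have h: "real (card {P \<in> PM S. I \<subseteq> P \<and> conn P X Z}) = A_fun (card X) (card Z - card I) (int (n - card I)) * real (NN (n - card I))"
    if I: "I \<subseteq> pairs Y Z" "I \<noteq> {}" "disjoint I" for I
  proof -
    note r = resid[OF fS cS YS ZS YZ I(1) I(3)]
    have XI: "\<Union>I \<inter> X = {}" using r(3) XY XZ by blast
    have "card {P \<in> PM S. I \<subseteq> P \<and> conn P X Z} = card {P' \<in> PM (S - \<Union>I). conn (P' \<union> I) X Z}"
      by (rule restr_card[OF fS r(1) r(2) I(3)])
    also have "{P' \<in> PM (S - \<Union>I). conn (P' \<union> I) X Z} = {P' \<in> PM (S - \<Union>I). conn P' X (Z - \<Union>I)}"
    proof (rule Collect_cong)
      fix P' show "(P' \<in> PM (S - \<Union>I) \<and> conn (P' \<union> I) X Z) = (P' \<in> PM (S - \<Union>I) \<and> conn P' X (Z - \<Union>I))"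
        using conn_Un[of P' I X Z] conn_I_false[OF XI, of Z] conn_diff2[of P' S "\<Union>I" X Z] by blast
    qed
    finally have e: "card {P \<in> PM S. I \<subseteq> P \<and> conn P X Z} = card {P' \<in> PM (S - \<Union>I). conn P' X (Z - \<Union>I)}" .
    have "real (card {P' \<in> PM (S - \<Union>I). conn P' X (Z - \<Union>I)})
        = A_fun (card X) (card (Z - \<Union>I)) (int (n - card I)) * real (NN (n - card I))"
    proof (rule L1)
      show "finite (S - \<Union>I)" using fS by simp
      show "card (S - \<Union>I) = 2 * (n - card I)" by (rule r(5))
      show "X \<subseteq> S - \<Union>I" using XS XI by blast
      show "Z - \<Union>I \<subseteq> S - \<Union>I" using ZS by blast
      show "X \<inter> (Z - \<Union>I) = {}" using XZ by blast
    qed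
    then show ?thesis using e r(8) by simp
  qed
  have "{P \<in> PM S. conn P X Z \<and> conn P Y Z} = {P \<in> PM S. conn P Y Z \<and> conn P X Z}" by blast
  then have "real (card {P \<in> PM S. conn P X Z \<and> conn P Y Z})
     = (\<Sum>t = 1..min (card Y) (card Z). real (card Y choose t) * real (card Z choose t) * fact t *
          ((-1) ^ (t + 1) * (A_fun (card X) (card Z - t) (int (n - t)) * real (NN (n - t)))))"
    using IE_main[where R = "\<lambda>P. conn P X Z" and h = "\<lambda>t. A_fun (card X) (card Z - t) (int (n - t)) * real (NN (n - t))",
        OF fS fX(2) fX(3) YZ h] by simp
  also have "\<dots> = (\<Sum>t = 1..min (card Y) (card Z - 1). real (card Y choose t) * real (card Z choose t) * fact t *
          ((-1) ^ (t + 1) * (A_fun (card X) (card Z - t) (int (n - t)) * real (NN (n - t)))))"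
  proof -
    define \<psi> where "\<psi> = (\<lambda>t. real (card Y choose t) * real (card Z choose t) * fact t *
          ((-1) ^ (t + 1) * (A_fun (card X) (card Z - t) (int (n - t)) * real (NN (n - t)))))"
    have z: "\<forall>t\<in>{1..min (card Y) (card Z)} - {1..min (card Y) (card Z - 1)}. \<psi> t = 0"
    proof
      fix t assume "t \<in> {1..min (card Y) (card Z)} - {1..min (card Y) (card Z - 1)}"
      then have "t = card Z" by auto
      then show "\<psi> t = 0" unfolding \<psi>_def by (simp add: A_fun_0)
    qed
    have "sum \<psi> {1..min (card Y) (card Z)} = sum \<psi> {1..min (card Y) (card Z - 1)}"
      by (rule sum.mono_neutral_right[OF _ _ z]) auto
    then show ?thesis unfolding \<psi>_def .
  qed
  also have "\<dots> = (\<Sum>t = 1..min (card Y) (card Z - 1). (-1) ^ (t + 1) * A_fun (card X) (card Z - t) (int n - int t) *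
      (real (card Z choose t) * real (card Y choose t) * fact t) / dprod (int n) t * real (NN n))"
  proof (rule sum.cong[OF refl])
    fix t assume t: "t \<in> {1..min (card Y) (card Z - 1)}"
    then have "t \<le> min (card Y) (card Z)" by auto
    then have tn: "t \<le> n" using min_le_n[OF fS cS YS ZS YZ] by (rule order_trans)
    have p: "dprod (int n) t > 0" by (rule dprod_pos[OF tn])
    have ii: "int n - int t = int (n - t)" using tn by simp
    show "real (card Y choose t) * real (card Z choose t) * fact t *
          ((-1) ^ (t + 1) * (A_fun (card X) (card Z - t) (int (n - t)) * real (NN (n - t))))
        = (-1) ^ (t + 1) * A_fun (card X) (card Z - t) (int n - int t) *
      (real (card Z choose t) * real (card Y choose t) * fact t) / dprod (int n) t * real (NN n)"
      unfolding ii using NN_dprod[OF tn] p by (simp add: field_simps)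
  qed
  also have "\<dots> = C_fun (card X) (card Y) (card Z) (int n) * real (NN n)"
    unfolding C_fun_def by (simp add: sum_distrib_right)
  finally show ?thesis .
qed

lemma L3:
  assumes fS: "finite S" and cS: "card S = 2 * n" and XS: "X \<subseteq> S" and YS: "Y \<subseteq> S" and ZS: "Z \<subseteq> S"
    and XY: "X \<inter> Y = {}" and XZ: "X \<inter> Z = {}" and YZ: "Y \<inter> Z = {}"
  shows "real (card {P \<in> PM S. conn P X Z \<and> conn P Y Z \<and> conn P X Y}) = T_fun (card X) (card Y) (card Z) (int n) * real (NN n)"
proof -
  have fX: "finite X" "finite Y" "finite Z" using XS YS ZS fS by (blast intro: finite_subset)+
  have h: "real (card {P \<in> PM S. I \<subseteq> P \<and> (conn P X Z \<and> conn P Y Z)})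
      = C_fun (card X - card I) (card Y - card I) (card Z) (int (n - card I)) * real (NN (n - card I))"
    if I: "I \<subseteq> pairs X Y" "I \<noteq> {}" "disjoint I" for I
  proof -
    note r = resid[OF fS cS XS YS XY I(1) I(3)]
    have ZI: "\<Union>I \<inter> Z = {}" using r(3) XZ YZ by blast
    have "card {P \<in> PM S. I \<subseteq> P \<and> (conn P X Z \<and> conn P Y Z)}
        = card {P' \<in> PM (S - \<Union>I). conn (P' \<union> I) X Z \<and> conn (P' \<union> I) Y Z}"
      by (rule restr_card[OF fS r(1) r(2) I(3)])
    also have "{P' \<in> PM (S - \<Union>I). conn (P' \<union> I) X Z \<and> conn (P' \<union> I) Y Z}
             = {P' \<in> PM (S - \<Union>I). conn P' (X - \<Union>I) Z \<and> conn P' (Y - \<Union>I) Z}"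
    proof (rule Collect_cong)
      fix P' show "(P' \<in> PM (S - \<Union>I) \<and> conn (P' \<union> I) X Z \<and> conn (P' \<union> I) Y Z)
          = (P' \<in> PM (S - \<Union>I) \<and> conn P' (X - \<Union>I) Z \<and> conn P' (Y - \<Union>I) Z)"
        using conn_Un[of P' I X Z] conn_Un[of P' I Y Z] conn_I_false2[OF ZI, of X] conn_I_false2[OF ZI, of Y]
          conn_diff1[of P' S "\<Union>I" X Z] conn_diff1[of P' S "\<Union>I" Y Z] by blast
    qed
    finally have e: "card {P \<in> PM S. I \<subseteq> P \<and> (conn P X Z \<and> conn P Y Z)}
        = card {P' \<in> PM (S - \<Union>I). conn P' (X - \<Union>I) Z \<and> conn P' (Y - \<Union>I) Z}" .
    have "real (card {P' \<in> PM (S - \<Union>I). conn P' (X - \<Union>I) Z \<and> conn P' (Y - \<Union>I) Z})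
        = C_fun (card (X - \<Union>I)) (card (Y - \<Union>I)) (card Z) (int (n - card I)) * real (NN (n - card I))"
    proof (rule L2)
      show "finite (S - \<Union>I)" using fS by simp
      show "card (S - \<Union>I) = 2 * (n - card I)" by (rule r(5))
      show "X - \<Union>I \<subseteq> S - \<Union>I" using XS by blast
      show "Y - \<Union>I \<subseteq> S - \<Union>I" using YS by blast
      show "Z \<subseteq> S - \<Union>I" using ZS ZI by blast
      show "(X - \<Union>I) \<inter> (Y - \<Union>I) = {}" using XY by blast
      show "(X - \<Union>I) \<inter> Z = {}" using XZ by blast
      show "(Y - \<Union>I) \<inter> Z = {}" using YZ by blast
    qed
    then show ?thesis using e r(7) r(8) by simp
  qed
  have "{P \<in> PM S. conn P X Z \<and> conn P Y Z \<and> conn P X Y} = {P \<in> PM S. conn P X Y \<and> (conn P X Z \<and> conn P Y Z)}" by blast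
  then have "real (card {P \<in> PM S. conn P X Z \<and> conn P Y Z \<and> conn P X Y})
     = (\<Sum>t = 1..min (card X) (card Y). real (card X choose t) * real (card Y choose t) * fact t *
          ((-1) ^ (t + 1) * (C_fun (card X - t) (card Y - t) (card Z) (int (n - t)) * real (NN (n - t)))))"
    using IE_main[where R = "\<lambda>P. conn P X Z \<and> conn P Y Z" and h = "\<lambda>t. C_fun (card X - t) (card Y - t) (card Z) (int (n - t)) * real (NN (n - t))",
        OF fS fX(1) fX(2) XY h] by simp
  also have "\<dots> = (\<Sum>t = 1..min (card X - 1) (card Y - 1). real (card X choose t) * real (card Y choose t) * fact t *
          ((-1) ^ (t + 1) * (C_fun (card X - t) (card Y - t) (card Z) (int (n - t)) * real (NN (n - t)))))"
  proof -
    define \<psi> where "\<psi> = (\<lambda>t. real (card X choose t) * real (card Y choose t) * fact t *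
          ((-1) ^ (t + 1) * (C_fun (card X - t) (card Y - t) (card Z) (int (n - t)) * real (NN (n - t)))))"
    have z: "\<forall>t\<in>{1..min (card X) (card Y)} - {1..min (card X - 1) (card Y - 1)}. \<psi> t = 0"
    proof
      fix t assume "t \<in> {1..min (card X) (card Y)} - {1..min (card X - 1) (card Y - 1)}"
      then have "card X - t = 0 \<or> card Y - t = 0" by auto
      then show "\<psi> t = 0" unfolding \<psi>_def by (auto simp: C_fun_0)
    qed
    have "sum \<psi> {1..min (card X) (card Y)} = sum \<psi> {1..min (card X - 1) (card Y - 1)}"
      by (rule sum.mono_neutral_right[OF _ _ z]) auto
    then show ?thesis unfolding \<psi>_def .
  qed
  also have "\<dots> = (\<Sum>t = 1..min (card X - 1) (card Y - 1). (-1) ^ (t + 1) * C_fun (card X - t) (card Y - t) (card Z) (int n - int t) *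
      (real (card X choose t) * real (card Y choose t) * fact t) / dprod (int n) t * real (NN n))"
  proof (rule sum.cong[OF refl])
    fix t assume t: "t \<in> {1..min (card X - 1) (card Y - 1)}"
    then have "t \<le> min (card X) (card Y)" by auto
    then have tn: "t \<le> n" using min_le_n[OF fS cS XS YS XY] by (rule order_trans)
    have p: "dprod (int n) t > 0" by (rule dprod_pos[OF tn])
    have ii: "int n - int t = int (n - t)" using tn by simp
    show "real (card X choose t) * real (card Y choose t) * fact t *
          ((-1) ^ (t + 1) * (C_fun (card X - t) (card Y - t) (card Z) (int (n - t)) * real (NN (n - t))))
        = (-1) ^ (t + 1) * C_fun (card X - t) (card Y - t) (card Z) (int n - int t) *
      (real (card X choose t) * real (card Y choose t) * fact t) / dprod (int n) t * real (NN n)"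
      unfolding ii using NN_dprod[OF tn] p by (simp add: field_simps)
  qed
  also have "\<dots> = T_fun (card X) (card Y) (card Z) (int n) * real (NN n)"
    unfolding T_fun_def by (simp add: sum_distrib_right)
  finally show ?thesis .
qed



lemma handshake:
  assumes "simple_graph V E"
  shows "card (stubs V E) = 2 * card E" "finite (stubs V E)" "finite E"
proof -
  have fV: "finite V" using assms by (simp add: simple_graph_def)
  have SG: "\<forall>e\<in>E. \<exists>u v. u \<noteq> v \<and> u \<in> V \<and> v \<in> V \<and> e = {u, v}" using assms by (simp add: simple_graph_def)
  have EV: "E \<subseteq> Pow V"
  proof
    fix e assume eE: "e \<in> E"
    then obtain u v where "u \<in> V" "v \<in> V" "e = {u, v}" using SG by blast
    then show "e \<in> Pow V" by simp
  qed
  show fE: "finite E" by (rule finite_subset[OF EV]) (simp add: fV)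
  have e2: "card e = 2" "e \<subseteq> V" if eE: "e \<in> E" for e
  proof -
    obtain u v where "u \<noteq> v" "u \<in> V" "v \<in> V" "e = {u, v}" using SG eE by blast
    then show "card e = 2" "e \<subseteq> V" by auto
  qed
  have st: "stubs V E = Sigma V (\<lambda>i. {..<deg E i})" unfolding stubs_def by auto
  show "finite (stubs V E)" unfolding st using fV by simp
  have "card (stubs V E) = (\<Sum>i\<in>V. card {..<deg E i})" unfolding st using fV by (simp add: card_SigmaI)
  also have "\<dots> = (\<Sum>i\<in>V. \<Sum>e\<in>E. if i \<in> e then 1 else 0)"
  proof (rule sum.cong[OF refl])
    fix i assume "i \<in> V"
    have "card {..<deg E i} = deg E i" by simp
    also have "\<dots> = (\<Sum>e\<in>{e \<in> E. i \<in> e}. 1)" unfolding deg_def by simp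
    also have "\<dots> = (\<Sum>e\<in>E. if i \<in> e then 1 else 0)" by (rule sum.inter_filter[OF fE])
    finally show "card {..<deg E i} = (\<Sum>e\<in>E. if i \<in> e then 1 else 0)" .
  qed
  also have "\<dots> = (\<Sum>e\<in>E. \<Sum>i\<in>V. if i \<in> e then 1 else 0)" by (rule sum.swap)
  also have "\<dots> = (\<Sum>e\<in>E. 2)"
  proof (rule sum.cong[OF refl])
    fix e assume e: "e \<in> E"
    have "(\<Sum>i\<in>V. if i \<in> e then 1 else 0) = (\<Sum>i\<in>{i \<in> V. i \<in> e}. 1::nat)" by (rule sum.inter_filter[OF fV, symmetric])
    also have "{i \<in> V. i \<in> e} = e" using e2[OF e] by auto
    finally show "(\<Sum>i\<in>V. if i \<in> e then 1 else 0) = (2::nat)" using e2[OF e] by simp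
  qed
  finally show "card (stubs V E) = 2 * card E" by simp
qed

definition Xs :: "'a set set \<Rightarrow> 'a \<Rightarrow> ('a \<times> nat) set" where
  "Xs E u = Pair u ` {..<deg E u}"

lemma Xs_props:
  assumes "u \<in> V"
  shows "Xs E u \<subseteq> stubs V E" "card (Xs E u) = deg E u"
proof -
  show "Xs E u \<subseteq> stubs V E" using assms unfolding Xs_def stubs_def by auto
  have "inj_on (Pair u) {..<deg E u}" by (simp add: inj_on_def)
  then show "card (Xs E u) = deg E u" unfolding Xs_def by (simp add: card_image)
qed

lemma Xs_disj: "u \<noteq> v \<Longrightarrow> Xs E u \<inter> Xs E v = {}"
  unfolding Xs_def by auto

lemma cm_conn:
  assumes "P \<in> PM (stubs V E)"
  shows "cm_connected P u v \<longleftrightarrow> conn P (Xs E u) (Xs E v)"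
proof
  assume "cm_connected P u v"
  then obtain b s t where b: "b \<in> P" "(u, s) \<in> b" "(v, t) \<in> b" unfolding cm_connected_def by blast
  have "b \<subseteq> stubs V E" using assms b(1) by (auto simp: PM_iff)
  then have "(u, s) \<in> Xs E u" "(v, t) \<in> Xs E v" using b unfolding stubs_def Xs_def by auto
  then have "b \<inter> Xs E u \<noteq> {}" "b \<inter> Xs E v \<noteq> {}" using b by auto
  then show "conn P (Xs E u) (Xs E v)" unfolding conn_def by (intro bexI[OF _ b(1)] conjI)
next
  assume "conn P (Xs E u) (Xs E v)"
  then obtain b where b: "b \<in> P" "b \<inter> Xs E u \<noteq> {}" "b \<inter> Xs E v \<noteq> {}" unfolding conn_def by (elim bexE conjE)
  then obtain s t where "(u, s) \<in> b" "(v, t) \<in> b" unfolding Xs_def by blast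
  then show "cm_connected P u v" unfolding cm_connected_def using b(1) by blast
qed

theorem proposition1:
  fixes V :: "'a set" and E :: "'a set set" and i j r :: 'a
  assumes "simple_graph V E"
    and "card E \<ge> 1"
    and "i \<in> V" and "j \<in> V" and "r \<in> V"
    and "i \<noteq> j" and "i \<noteq> r" and "j \<noteq> r"
  shows "cm_prob V E (\<lambda>P. cm_connected P i j)
           = A_fun (deg E i) (deg E j) (int (card E))
    \<and> cm_prob V E (\<lambda>P. cm_connected P i r \<and> cm_connected P j r)
           = C_fun (deg E i) (deg E j) (deg E r) (int (card E))
    \<and> cm_prob V E (\<lambda>P. cm_connected P i r \<and> cm_connected P j r \<and> cm_connected P i j)
           = T_fun (deg E i) (deg E j) (deg E r) (int (card E))"
proof -
  note hs = handshake[OF assms(1)]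
  define S where "S = stubs V E"
  define n where "n = card E"
  have fS: "finite S" and cS: "card S = 2 * n" using hs unfolding S_def n_def by auto
  have XS: "Xs E i \<subseteq> S" "Xs E j \<subseteq> S" "Xs E r \<subseteq> S" unfolding S_def
    by (rule Xs_props(1)[OF assms(3)], rule Xs_props(1)[OF assms(4)], rule Xs_props(1)[OF assms(5)])
  have cX: "card (Xs E i) = deg E i" "card (Xs E j) = deg E j" "card (Xs E r) = deg E r"
    by (rule Xs_props(2)[OF assms(3)], rule Xs_props(2)[OF assms(4)], rule Xs_props(2)[OF assms(5)])
  have D: "Xs E i \<inter> Xs E j = {}" "Xs E i \<inter> Xs E r = {}" "Xs E j \<inter> Xs E r = {}"
    by (rule Xs_disj[OF assms(6)], rule Xs_disj[OF assms(7)], rule Xs_disj[OF assms(8)])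
  have N: "real (card (PM S)) = real (NN n)" using PM_card[OF fS cS] by simp
  have Npos: "real (NN n) > 0" using NN_pos by simp
  have e1: "{P \<in> PM S. cm_connected P i j} = {P \<in> PM S. conn P (Xs E i) (Xs E j)}"
    unfolding S_def
  proof (rule Collect_cong)
    fix P show "(P \<in> PM (stubs V E) \<and> cm_connected P i j) = (P \<in> PM (stubs V E) \<and> conn P (Xs E i) (Xs E j))"
      using cm_conn[of P V E i j] by blast
  qed
  have e2: "{P \<in> PM S. cm_connected P i r \<and> cm_connected P j r}
      = {P \<in> PM S. conn P (Xs E i) (Xs E r) \<and> conn P (Xs E j) (Xs E r)}"
    unfolding S_def
  proof (rule Collect_cong)
    fix P show "(P \<in> PM (stubs V E) \<and> cm_connected P i r \<and> cm_connected P j r) = (P \<in> PM (stubs V E) \<and> conn P (Xs E i) (Xs E r) \<and> conn P (Xs E j) (Xs E r))"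
      using cm_conn[of P V E i r] cm_conn[of P V E j r] by blast
  qed
  have e3: "{P \<in> PM S. cm_connected P i r \<and> cm_connected P j r \<and> cm_connected P i j}
      = {P \<in> PM S. conn P (Xs E i) (Xs E r) \<and> conn P (Xs E j) (Xs E r) \<and> conn P (Xs E i) (Xs E j)}"
    unfolding S_def
  proof (rule Collect_cong)
    fix P show "(P \<in> PM (stubs V E) \<and> cm_connected P i r \<and> cm_connected P j r \<and> cm_connected P i j) = (P \<in> PM (stubs V E) \<and> conn P (Xs E i) (Xs E r) \<and> conn P (Xs E j) (Xs E r) \<and> conn P (Xs E i) (Xs E j))"
      using cm_conn[of P V E i r] cm_conn[of P V E j r] cm_conn[of P V E i j] by blast
  qed
  have r1: "real (card {P \<in> PM S. cm_connected P i j}) = A_fun (deg E i) (deg E j) (int n) * real (NN n)"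
    unfolding e1 using L1[OF fS cS XS(1) XS(2) D(1)] cX by simp
  have r2: "real (card {P \<in> PM S. cm_connected P i r \<and> cm_connected P j r}) = C_fun (deg E i) (deg E j) (deg E r) (int n) * real (NN n)"
    unfolding e2 using L2[OF fS cS XS(1) XS(2) XS(3) D(1) D(2) D(3)] cX by simp
  have r3: "real (card {P \<in> PM S. cm_connected P i r \<and> cm_connected P j r \<and> cm_connected P i j}) = T_fun (deg E i) (deg E j) (deg E r) (int n) * real (NN n)"
    unfolding e3 using L3[OF fS cS XS(1) XS(2) XS(3) D(1) D(2) D(3)] cX by simp
  show ?thesis
    unfolding cm_prob_def S_def[symmetric] n_def[symmetric] N r1 r2 r3 using Npos by simp
qed


end
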